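(* Let $\mathbb{A}$ be a medial algebra over a field of characteristic not $2,3$ and let $\mathrm{Idm}^{\times}(\mathbb{A})$ be the set of nonzero idempotents $c$ of $\mathbb{A}$ with $\ker L_c=0$. Then $\mathrm{Idm}^{\times}(\mathbb{A})$, with the algebra multiplication, is a medial idempotent quasigroup. Furthermore, all $c\in\mathrm{Idm}^{\times}(\mathbb{A})$ have the same characteristic polynomial of $L_c$.
   Context: All algebras are commutative, possibly nonassociative, finite-dimensional. Medial: $(xy)(zw)=(xz)(yw)$ identically. $L_c:x\mapsto cx$. A quasigroup is a set with binary operation $\circ$ such that $a\circ x=b$ and $y\circ a=b$ have unique solutions; it is idempotent if $x\circ x=x$ and medial if $(x\circ y)\circ(z\circ w)=(x\circ z)\circ(y\circ w)$. *)

theory Defs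
  imports "Jordan_Normal_Form.Char_Poly"
begin

text \<open>A finite-dimensional algebra over a field 'k is modelled, after choosing a basis,
  as the coordinate space carrier_vec n together with a binary operation mul on it.\<close>

definition algebra_on :: "nat \<Rightarrow> ('k::field vec \<Rightarrow> 'k vec \<Rightarrow> 'k vec) \<Rightarrow> bool" where
  "algebra_on n mul \<longleftrightarrow>
     (\<forall>x\<in>carrier_vec n. \<forall>y\<in>carrier_vec n. mul x y \<in> carrier_vec n) \<and>
     (\<forall>x\<in>carrier_vec n. \<forall>y\<in>carrier_vec n. \<forall>z\<in>carrier_vec n. mul (x + y) z = mul x z + mul y z) \<and>
     (\<forall>x\<in>carrier_vec n. \<forall>y\<in>carrier_vec n. \<forall>z\<in>carrier_vec n. mul x (y + z) = mul x y + mul x z) \<and>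
     (\<forall>a. \<forall>x\<in>carrier_vec n. \<forall>y\<in>carrier_vec n. mul (a \<cdot>\<^sub>v x) y = a \<cdot>\<^sub>v mul x y) \<and>
     (\<forall>a. \<forall>x\<in>carrier_vec n. \<forall>y\<in>carrier_vec n. mul x (a \<cdot>\<^sub>v y) = a \<cdot>\<^sub>v mul x y)"

definition commutative_on :: "nat \<Rightarrow> ('k vec \<Rightarrow> 'k vec \<Rightarrow> 'k vec) \<Rightarrow> bool" where
  "commutative_on n mul \<longleftrightarrow> (\<forall>x\<in>carrier_vec n. \<forall>y\<in>carrier_vec n. mul x y = mul y x)"

definition medial_algebra :: "nat \<Rightarrow> ('k vec \<Rightarrow> 'k vec \<Rightarrow> 'k vec) \<Rightarrow> bool" where
  "medial_algebra n mul \<longleftrightarrow> (\<forall>x\<in>carrier_vec n. \<forall>y\<in>carrier_vec n. \<forall>z\<in>carrier_vec n. \<forall>w\<in>carrier_vec n.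
      mul (mul x y) (mul z w) = mul (mul x z) (mul y w))"

definition L_mat :: "nat \<Rightarrow> ('k::field vec \<Rightarrow> 'k vec \<Rightarrow> 'k vec) \<Rightarrow> 'k vec \<Rightarrow> 'k mat" where
  "L_mat n mul c = mat n n (\<lambda>(i, j). mul c (unit_vec n j) $ i)"

definition Idm_times :: "nat \<Rightarrow> ('k::field vec \<Rightarrow> 'k vec \<Rightarrow> 'k vec) \<Rightarrow> 'k vec set" where
  "Idm_times n mul = {c \<in> carrier_vec n. c \<noteq> 0\<^sub>v n \<and> mul c c = c \<and>
       (\<forall>x\<in>carrier_vec n. mul c x = 0\<^sub>v n \<longrightarrow> x = 0\<^sub>v n)}"

definition quasigroup_on :: "'a set \<Rightarrow> ('a \<Rightarrow> 'a \<Rightarrow> 'a) \<Rightarrow> bool" where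
  "quasigroup_on S f \<longleftrightarrow> (\<forall>x\<in>S. \<forall>y\<in>S. f x y \<in> S) \<and>
     (\<forall>a\<in>S. \<forall>b\<in>S. (\<exists>!x. x \<in> S \<and> f a x = b) \<and> (\<exists>!y. y \<in> S \<and> f y a = b))"

definition idempotent_on :: "'a set \<Rightarrow> ('a \<Rightarrow> 'a \<Rightarrow> 'a) \<Rightarrow> bool" where
  "idempotent_on S f \<longleftrightarrow> (\<forall>x\<in>S. f x x = x)"

definition medial_on :: "'a set \<Rightarrow> ('a \<Rightarrow> 'a \<Rightarrow> 'a) \<Rightarrow> bool" where
  "medial_on S f \<longleftrightarrow> (\<forall>x\<in>S. \<forall>y\<in>S. \<forall>z\<in>S. \<forall>w\<in>S. f (f x y) (f z w) = f (f x z) (f y w))"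

end

theory Submission
  imports Defs
begin

locale medalg =
  fixes n :: nat and mul :: "'k::field vec \<Rightarrow> 'k vec \<Rightarrow> 'k vec"
  assumes alg: "algebra_on n mul" and comm: "commutative_on n mul"
    and med: "medial_algebra n mul"
begin

lemma closed: "x \<in> carrier_vec n \<Longrightarrow> y \<in> carrier_vec n \<Longrightarrow> mul x y \<in> carrier_vec n"
  using alg unfolding algebra_on_def by blast

lemma addr: "x \<in> carrier_vec n \<Longrightarrow> y \<in> carrier_vec n \<Longrightarrow> z \<in> carrier_vec n \<Longrightarrow> mul x (y + z) = mul x y + mul x z"
  using alg unfolding algebra_on_def by blast

lemma smr: "x \<in> carrier_vec n \<Longrightarrow> y \<in> carrier_vec n \<Longrightarrow> mul x (a \<cdot>\<^sub>v y) = a \<cdot>\<^sub>v mul x y"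
  using alg unfolding algebra_on_def by blast

lemma cm: "x \<in> carrier_vec n \<Longrightarrow> y \<in> carrier_vec n \<Longrightarrow> mul x y = mul y x"
  using comm unfolding commutative_on_def by blast

lemma md: "x \<in> carrier_vec n \<Longrightarrow> y \<in> carrier_vec n \<Longrightarrow> z \<in> carrier_vec n \<Longrightarrow> w \<in> carrier_vec n
   \<Longrightarrow> mul (mul x y) (mul z w) = mul (mul x z) (mul y w)"
  using med unfolding medial_algebra_def by blast

lemma zr: assumes "x \<in> carrier_vec n" shows "mul x (0\<^sub>v n) = 0\<^sub>v n"
proof -
  have "(0\<^sub>v n :: 'k vec) = (0::'k) \<cdot>\<^sub>v 0\<^sub>v n" by (auto intro!: eq_vecI)
  hence "mul x (0\<^sub>v n) = mul x ((0::'k) \<cdot>\<^sub>v 0\<^sub>v n)" by simp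
  also have "\<dots> = 0 \<cdot>\<^sub>v mul x (0\<^sub>v n)" using smr assms by simp
  also have "\<dots> = 0\<^sub>v n" using closed[OF assms zero_carrier_vec] by auto
  finally show ?thesis .
qed

lemma Lcarrier: "L_mat n mul c \<in> carrier_mat n n"
  by (simp add: L_mat_def)

lemma Lvec: assumes c: "c \<in> carrier_vec n" and x: "x \<in> carrier_vec n"
  shows "L_mat n mul c *\<^sub>v x = mul c x"
proof -
  have step: "k \<le> n \<Longrightarrow> mul c (vec n (\<lambda>i. if i < k then x $ i else 0))
      = vec n (\<lambda>i. \<Sum>j<k. mul c (unit_vec n j) $ i * x $ j)" for k
  proof (induction k)
    case 0
    have "vec n (\<lambda>i. if i < 0 then x $ i else 0) = 0\<^sub>v n" by (auto simp: zero_vec_def)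
    moreover have "vec n (\<lambda>i. \<Sum>j<(0::nat). mul c (unit_vec n j) $ i * x $ j) = (0\<^sub>v n :: 'k vec)"
      by (auto simp: zero_vec_def)
    ultimately show ?case using zr[OF c] by simp
  next
    case (Suc k)
    have e: "vec n (\<lambda>i. if i < Suc k then x $ i else 0)
        = vec n (\<lambda>i. if i < k then x $ i else 0) + x $ k \<cdot>\<^sub>v unit_vec n k"
      using Suc.prems by (auto intro!: eq_vecI simp: unit_vec_def less_Suc_eq)
    have ce: "mul c (unit_vec n k) \<in> carrier_vec n" using closed c by simp
    have "mul c (vec n (\<lambda>i. if i < Suc k then x $ i else 0))
        = mul c (vec n (\<lambda>i. if i < k then x $ i else 0)) + x $ k \<cdot>\<^sub>v mul c (unit_vec n k)"
      unfolding e using addr[OF c] smr[OF c] by simp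
    also have "\<dots> = vec n (\<lambda>i. \<Sum>j<Suc k. mul c (unit_vec n j) $ i * x $ j)"
      using Suc ce by (auto intro!: eq_vecI simp: mult.commute)
    finally show ?case .
  qed
  have "vec n (\<lambda>i. if i < n then x $ i else 0) = x" using x by (auto intro!: eq_vecI)
  with step[of n] have "mul c x = vec n (\<lambda>i. \<Sum>j<n. mul c (unit_vec n j) $ i * x $ j)" by simp
  also have "\<dots> = L_mat n mul c *\<^sub>v x"
    using x by (auto intro!: eq_vecI simp: L_mat_def scalar_prod_def lessThan_atLeast0 row_def)
  finally show ?thesis by simp
qed

lemma mat_eqI: assumes A: "(A :: 'k mat) \<in> carrier_mat n n" and B: "B \<in> carrier_mat n n"
  and h: "\<And>x. x \<in> carrier_vec n \<Longrightarrow> A *\<^sub>v x = B *\<^sub>v x"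
shows "A = B"
proof (rule eq_matI)
  fix i j assume i: "i < dim_row B" and j: "j < dim_col B"
  have "(A *\<^sub>v unit_vec n j) $ i = (B *\<^sub>v unit_vec n j) $ i" using h by simp
  thus "A $$ (i, j) = B $$ (i, j)" using A B i j
    by simp
qed (use A B in auto)

lemma Lcomp: assumes a: "a \<in> carrier_vec n" "mul a a = a" and x: "x \<in> carrier_vec n"
  shows "L_mat n mul (mul a x) * L_mat n mul a = L_mat n mul a * L_mat n mul x"
proof (rule mat_eqI)
  show "L_mat n mul (mul a x) * L_mat n mul a \<in> carrier_mat n n" using Lcarrier mult_carrier_mat by blast
  show "L_mat n mul a * L_mat n mul x \<in> carrier_mat n n" using Lcarrier mult_carrier_mat by blast
  fix u :: "'k vec" assume u: "u \<in> carrier_vec n"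
  have "(L_mat n mul (mul a x) * L_mat n mul a) *\<^sub>v u = mul (mul a x) (mul a u)"
    using assoc_mult_mat_vec[OF Lcarrier Lcarrier u] u a x closed by (simp add: Lvec)
  also have "\<dots> = mul a (mul x u)" using md[of a x a u] a x u by simp
  also have "\<dots> = (L_mat n mul a * L_mat n mul x) *\<^sub>v u"
    using assoc_mult_mat_vec[OF Lcarrier Lcarrier u] u a x closed by (simp add: Lvec)
  finally show "(L_mat n mul (mul a x) * L_mat n mul a) *\<^sub>v u = (L_mat n mul a * L_mat n mul x) *\<^sub>v u" .
qed

lemma Linv: assumes a: "a \<in> Idm_times n mul"
  shows "\<exists>B\<in>carrier_mat n n. B * L_mat n mul a = 1\<^sub>m n \<and> L_mat n mul a * B = 1\<^sub>m n"
proof -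
  have ac: "a \<in> carrier_vec n" using a by (simp add: Idm_times_def)
  have "det (L_mat n mul a) \<noteq> 0"
  proof
    assume "det (L_mat n mul a) = 0"
    then obtain v where "v \<in> carrier_vec n" "v \<noteq> 0\<^sub>v n" "L_mat n mul a *\<^sub>v v = 0\<^sub>v n"
      using det_0_iff_vec_prod_zero_field[OF Lcarrier] by blast
    with a ac Lvec show False by (auto simp: Idm_times_def)
  qed
  from det_non_zero_imp_unit[OF Lcarrier this, of "()"]
  show ?thesis unfolding Units_def ring_mat_def by auto
qed

lemma inj: assumes a: "a \<in> Idm_times n mul" and u: "u \<in> carrier_vec n" and v: "v \<in> carrier_vec n"
  and e: "mul a u = mul a v" shows "u = v"
proof -
  have ac: "a \<in> carrier_vec n" using a by (simp add: Idm_times_def)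
  obtain B where B: "B \<in> carrier_mat n n" "B * L_mat n mul a = 1\<^sub>m n" using Linv[OF a] by blast
  have "u = (B * L_mat n mul a) *\<^sub>v u" using B u by simp
  also have "\<dots> = B *\<^sub>v mul a u" using assoc_mult_mat_vec[OF B(1) Lcarrier u] Lvec[OF ac u] by simp
  also have "\<dots> = (B * L_mat n mul a) *\<^sub>v v" using assoc_mult_mat_vec[OF B(1) Lcarrier v] Lvec[OF ac v] e by simp
  also have "\<dots> = v" using B v by simp
  finally show ?thesis .
qed

lemma surj: assumes a: "a \<in> Idm_times n mul" and b: "b \<in> carrier_vec n"
  shows "\<exists>x\<in>carrier_vec n. mul a x = b"
proof -
  have ac: "a \<in> carrier_vec n" using a by (simp add: Idm_times_def)
  obtain B where B: "B \<in> carrier_mat n n" "L_mat n mul a * B = 1\<^sub>m n" using Linv[OF a] by blast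
  have xc: "B *\<^sub>v b \<in> carrier_vec n" using B b by simp
  have "mul a (B *\<^sub>v b) = L_mat n mul a *\<^sub>v (B *\<^sub>v b)" using Lvec[OF ac xc] by simp
  also have "\<dots> = (L_mat n mul a * B) *\<^sub>v b" using assoc_mult_mat_vec[OF Lcarrier B(1) b] by simp
  also have "\<dots> = b" using B b by simp
  finally show ?thesis using xc by blast
qed

lemma Idm_carrier: "a \<in> Idm_times n mul \<Longrightarrow> a \<in> carrier_vec n"
  by (simp add: Idm_times_def)

lemma prod_Idm: assumes a: "a \<in> Idm_times n mul" and x: "x \<in> carrier_vec n" "mul x x = x"
  and h: "\<And>u. u \<in> carrier_vec n \<Longrightarrow> mul x u = 0\<^sub>v n \<Longrightarrow> u = 0\<^sub>v n"
  shows "mul a x \<in> Idm_times n mul"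
proof -
  have ac: "a \<in> carrier_vec n" and aa: "mul a a = a" and an: "a \<noteq> 0\<^sub>v n"
    using a by (auto simp: Idm_times_def)
  have axc: "mul a x \<in> carrier_vec n" using closed ac x by simp
  have idm: "mul (mul a x) (mul a x) = mul a x" using md[OF ac x(1) ac x(1)] aa x by simp
  have ker: "u = 0\<^sub>v n" if u: "u \<in> carrier_vec n" and z: "mul (mul a x) u = 0\<^sub>v n" for u
  proof -
    obtain v where v: "v \<in> carrier_vec n" "mul a v = u" using surj[OF a u] by blast
    have "mul a (mul x v) = mul (mul a x) (mul a v)" using md[OF ac x(1) ac v(1)] aa by simp
    also have "\<dots> = mul a (0\<^sub>v n)" using z v zr[OF ac] by simp
    finally have "mul x v = 0\<^sub>v n" using inj[OF a] closed x v by simp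
    hence "v = 0\<^sub>v n" using h v by simp
    thus ?thesis using v zr[OF ac] by simp
  qed
  have "mul a x \<noteq> 0\<^sub>v n"
  proof
    assume "mul a x = 0\<^sub>v n"
    hence "mul (mul a x) a = 0\<^sub>v n" using cm[OF _ ac] zr[OF ac] by simp
    thus False using ker[OF ac] an by simp
  qed
  thus ?thesis using axc idm ker by (auto simp: Idm_times_def)
qed

lemma similar: assumes a: "a \<in> Idm_times n mul" and x: "x \<in> carrier_vec n"
  shows "similar_mat (L_mat n mul (mul a x)) (L_mat n mul x)"
proof -
  have ac: "a \<in> carrier_vec n" and aa: "mul a a = a" using a by (auto simp: Idm_times_def)
  obtain B where B: "B \<in> carrier_mat n n" "B * L_mat n mul a = 1\<^sub>m n" "L_mat n mul a * B = 1\<^sub>m n"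
    using Linv[OF a] by blast
  have LA: "L_mat n mul a \<in> carrier_mat n n" "L_mat n mul x \<in> carrier_mat n n"
      "L_mat n mul (mul a x) \<in> carrier_mat n n" using Lcarrier by auto
  have "L_mat n mul (mul a x) = L_mat n mul (mul a x) * (L_mat n mul a * B)" using B LA by simp
  also have "\<dots> = (L_mat n mul (mul a x) * L_mat n mul a) * B" using B LA by (simp add: assoc_mult_mat)
  also have "\<dots> = L_mat n mul a * L_mat n mul x * B" using Lcomp[OF ac aa x] by simp
  finally have "L_mat n mul (mul a x) = L_mat n mul a * L_mat n mul x * B" .
  thus ?thesis by (intro similar_matI[where n=n and P="L_mat n mul a" and Q=B]) (use B LA in auto)
qed

end

theorem proposition3p6:
  fixes n :: nat and mul :: "'k::field vec \<Rightarrow> 'k vec \<Rightarrow> 'k vec"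
  assumes char2: "(2::'k) \<noteq> 0" and char3: "(3::'k) \<noteq> 0"
    and alg: "algebra_on n mul" and comm: "commutative_on n mul"
    and med: "medial_algebra n mul"
  shows "quasigroup_on (Idm_times n mul) mul \<and> idempotent_on (Idm_times n mul) mul
           \<and> medial_on (Idm_times n mul) mul
           \<and> (\<forall>c\<in>Idm_times n mul. \<forall>d\<in>Idm_times n mul.
                char_poly (L_mat n mul c) = char_poly (L_mat n mul d))"
proof -
  interpret medalg n mul using alg comm med by unfold_locales
  let ?S = "Idm_times n mul"
  have cl: "mul x y \<in> ?S" if "x \<in> ?S" "y \<in> ?S" for x y
    using prod_Idm[OF that(1) Idm_carrier[OF that(2)]] that(2) by (auto simp: Idm_times_def)
  have ex: "\<exists>!x. x \<in> ?S \<and> mul a x = b" if a: "a \<in> ?S" and b: "b \<in> ?S" for a b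
  proof -
    have ac: "a \<in> carrier_vec n" and aa: "mul a a = a" using a by (auto simp: Idm_times_def)
    have bc: "b \<in> carrier_vec n" and bb: "mul b b = b" and bn: "b \<noteq> 0\<^sub>v n"
      and bk: "\<And>u. u \<in> carrier_vec n \<Longrightarrow> mul b u = 0\<^sub>v n \<Longrightarrow> u = 0\<^sub>v n"
      using b by (auto simp: Idm_times_def)
    obtain x where x: "x \<in> carrier_vec n" "mul a x = b" using surj[OF a bc] by blast
    have xxc: "mul x x \<in> carrier_vec n" using closed x by simp
    have "mul a (mul x x) = mul (mul a x) (mul a x)" using md[OF ac x(1) ac x(1)] aa by simp
    also have "\<dots> = mul a x" using x bb by simp
    finally have xx: "mul x x = x" using inj[OF a xxc x(1)] by simp
    have xn: "x \<noteq> 0\<^sub>v n" using x bn zr[OF ac] by auto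
    have xk: "u = 0\<^sub>v n" if u: "u \<in> carrier_vec n" and z: "mul x u = 0\<^sub>v n" for u
    proof -
      have auc: "mul a u \<in> carrier_vec n" using closed ac u by simp
      have "mul b (mul a u) = mul a (mul x u)" using md[OF ac x(1) ac u] aa x by simp
      also have "\<dots> = 0\<^sub>v n" using z zr[OF ac] by simp
      finally have "mul a u = 0\<^sub>v n" using bk auc by simp
      hence "mul a u = mul a (0\<^sub>v n)" using zr[OF ac] by simp
      thus ?thesis using inj[OF a u] by simp
    qed
    have xS: "x \<in> ?S" using x xx xn xk by (auto simp: Idm_times_def)
    show ?thesis
    proof (rule ex1I[of _ x])
      show "x \<in> ?S \<and> mul a x = b" using xS x by simp
      fix y assume "y \<in> ?S \<and> mul a y = b"
      thus "y = x" using inj[OF a] Idm_carrier x by metis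
    qed
  qed
  have q: "quasigroup_on ?S mul"
    unfolding quasigroup_on_def
  proof (intro conjI ballI)
    fix a b assume a: "a \<in> ?S" and b: "b \<in> ?S"
    show "\<exists>!x. x \<in> ?S \<and> mul a x = b" using ex[OF a b] .
    have "\<And>y. y \<in> ?S \<Longrightarrow> mul y a = mul a y" using cm Idm_carrier a by metis
    hence "(\<lambda>y. y \<in> ?S \<and> mul y a = b) = (\<lambda>y. y \<in> ?S \<and> mul a y = b)" by (auto intro!: ext)
    thus "\<exists>!y. y \<in> ?S \<and> mul y a = b" using ex[OF a b] by simp
  qed (use cl in auto)
  have i: "idempotent_on ?S mul" by (auto simp: idempotent_on_def Idm_times_def)
  have m: "medial_on ?S mul" unfolding medial_on_def using md Idm_carrier by blast
  have c: "char_poly (L_mat n mul c) = char_poly (L_mat n mul d)" if c: "c \<in> ?S" and d: "d \<in> ?S" for c d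
  proof -
    have "char_poly (L_mat n mul (mul c d)) = char_poly (L_mat n mul d)"
      using char_poly_similar[OF similar[OF c Idm_carrier[OF d]]] .
    moreover have "char_poly (L_mat n mul (mul d c)) = char_poly (L_mat n mul c)"
      using char_poly_similar[OF similar[OF d Idm_carrier[OF c]]] .
    moreover have "mul c d = mul d c" using cm Idm_carrier c d by blast
    ultimately show ?thesis by simp
  qed
  show ?thesis using q i m c by blast
qed

end
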